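(* Let $G$ be a finite simple graph on $n$ vertices and $v$ a vertex of $G$ of degree $d$. Then \[\max\{-d,\,-(n-d-1)\}\le \mathrm{mur}(G)-\mathrm{mur}(G\setminus\{v\})\le \min\{d+2,\,(n-d-1)+2\},\] where $G\setminus\{v\}$ is the graph obtained from $G$ by deleting $v$ and its incident edges.
   Context: For a finite simple undirected graph $G$ on vertices $v_1,\dots,v_n$, let $A_G$ be its $(0,1)$-adjacency matrix, $D_G=\mathrm{diag}(d_1,\dots,d_n)$ with $d_i$ the degree of $v_i$, $I$ the $n\times n$ identity matrix and $J$ the $n\times n$ all-ones matrix. A universal adjacency matrix of $G$ is any matrix $\alpha A_G+\beta I+\gamma J+\delta D_G$ with real scalars $\alpha,\beta,\gamma,\delta$ and $\alpha\neq 0$. The minimum universal rank $\mathrm{mur}(G)$ is the minimum rank over all universal adjacency matrices of $G$. *)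

theory Defs
  imports "Jordan_Normal_Form.DL_Rank"
begin

text \<open>A finite simple graph on the vertex set {0..<n}, given by an edge relation E
  that is symmetric and irreflexive on the vertex set (values outside are irrelevant).\<close>
definition simple_graph :: "nat \<Rightarrow> (nat \<Rightarrow> nat \<Rightarrow> bool) \<Rightarrow> bool" where
  "simple_graph n E \<longleftrightarrow> (\<forall>i<n. \<forall>j<n. E i j \<longleftrightarrow> E j i) \<and> (\<forall>i<n. \<not> E i i)"

definition degree :: "nat \<Rightarrow> (nat \<Rightarrow> nat \<Rightarrow> bool) \<Rightarrow> nat \<Rightarrow> nat" where
  "degree n E i = card {j. j < n \<and> E i j}"

definition adj_mat :: "nat \<Rightarrow> (nat \<Rightarrow> nat \<Rightarrow> bool) \<Rightarrow> real mat" where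
  "adj_mat n E = mat n n (\<lambda>(i,j). if E i j then 1 else 0)"

definition deg_mat :: "nat \<Rightarrow> (nat \<Rightarrow> nat \<Rightarrow> bool) \<Rightarrow> real mat" where
  "deg_mat n E = mat n n (\<lambda>(i,j). if i = j then real (degree n E i) else 0)"

definition ones_mat :: "nat \<Rightarrow> real mat" where
  "ones_mat n = mat n n (\<lambda>_. 1)"

definition universal_adj :: "nat \<Rightarrow> (nat \<Rightarrow> nat \<Rightarrow> bool) \<Rightarrow> real \<Rightarrow> real \<Rightarrow> real \<Rightarrow> real \<Rightarrow> real mat" where
  "universal_adj n E \<alpha> \<beta> \<gamma> \<delta> =
     \<alpha> \<cdot>\<^sub>m adj_mat n E + \<beta> \<cdot>\<^sub>m 1\<^sub>m n + \<gamma> \<cdot>\<^sub>m ones_mat n + \<delta> \<cdot>\<^sub>m deg_mat n E"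

definition mur :: "nat \<Rightarrow> (nat \<Rightarrow> nat \<Rightarrow> bool) \<Rightarrow> nat" where
  "mur n E = Min {vec_space.rank n (universal_adj n E \<alpha> \<beta> \<gamma> \<delta>) | \<alpha> \<beta> \<gamma> \<delta>. \<alpha> \<noteq> 0}"

text \<open>Deleting vertex v from a graph on {0..<n}: the result lives on {0..<n-1},
  with vertices relabelled order-preservingly (i \<mapsto> i if i < v, else i+1).\<close>
definition skip :: "nat \<Rightarrow> nat \<Rightarrow> nat" where
  "skip v i = (if i < v then i else Suc i)"

definition delete_vertex :: "nat \<Rightarrow> (nat \<Rightarrow> nat \<Rightarrow> bool) \<Rightarrow> (nat \<Rightarrow> nat \<Rightarrow> bool)" where
  "delete_vertex v E = (\<lambda>i j. E (skip v i) (skip v j))"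

end

theory Submission
  imports Defs
begin

abbreviation spn :: "nat \<Rightarrow> real vec set \<Rightarrow> real vec set" where
  "spn k S \<equiv> LinearCombinations.module.span class_ring (module_vec TYPE(real) k) S"

abbreviation li :: "nat \<Rightarrow> real vec set \<Rightarrow> bool" where
  "li k S \<equiv> LinearCombinations.module.lin_indpt class_ring (module_vec TYPE(real) k) S"

lemma span_image:
  fixes f :: "real vec \<Rightarrow> real vec"
  assumes fc: "\<And>x. x \<in> carrier_vec n \<Longrightarrow> f x \<in> carrier_vec m"
    and fadd: "\<And>x y. x \<in> carrier_vec n \<Longrightarrow> y \<in> carrier_vec n \<Longrightarrow> f (x + y) = f x + f y"
    and fsm: "\<And>c x. x \<in> carrier_vec n \<Longrightarrow> f (c \<cdot>\<^sub>v x) = c \<cdot>\<^sub>v f x"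
    and T: "T \<subseteq> carrier_vec n"
    and x: "x \<in> spn n T"
  shows "f x \<in> spn m (f ` T)"
proof -
  interpret N: vec_space "TYPE(real)" n .
  interpret Mm: vec_space "TYPE(real)" m .
  have fT: "f ` T \<subseteq> carrier_vec m" using T fc by auto
  obtain a A where xa: "x = N.lincomb a A" and A: "finite A" "A \<subseteq> T"
    using N.in_spanE[OF x] by blast
  have "f (N.lincomb a A) \<in> spn m (f ` T)" using A
  proof (induction A rule: finite_induct)
    case empty
    have "f (0\<^sub>v n) = f (0 \<cdot>\<^sub>v 0\<^sub>v n)" by simp
    also have "\<dots> = 0 \<cdot>\<^sub>v f (0\<^sub>v n)" using fsm by blast
    also have "\<dots> = 0\<^sub>v m" using fc[of "0\<^sub>v n"] by auto
    finally show ?case using submodule.zero_closed[OF Mm.span_is_submodule[OF fT]] by (simp add: N.lincomb_def)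
  next
    case (insert y F)
    have yc: "y \<in> carrier_vec n" using insert T by auto
    have Fc: "F \<subseteq> carrier_vec n" using insert T by auto
    have "N.lincomb a (insert y F) = a y \<cdot>\<^sub>v y + N.lincomb a F"
      using N.lincomb_insert[where S=F and a=a and v=y] insert yc Fc by auto
    moreover have "N.lincomb a F \<in> carrier_vec n" using N.lincomb_closed Fc insert by auto
    ultimately have "f (N.lincomb a (insert y F)) = a y \<cdot>\<^sub>v f y + f (N.lincomb a F)"
      using fadd fsm yc by auto
    moreover have "f y \<in> spn m (f ` T)" using Mm.span_mem[OF fT] insert by auto
    hence "a y \<cdot>\<^sub>v f y \<in> spn m (f ` T)" using Mm.smult_in_span[OF fT] by auto
    ultimately show ?case using Mm.span_add1[OF fT] insert by auto
  qed
  thus ?thesis using xa by simp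
qed

lemma rank_image:
  fixes f :: "real vec \<Rightarrow> real vec"
  assumes fc: "\<And>x. x \<in> carrier_vec n \<Longrightarrow> f x \<in> carrier_vec m"
    and fadd: "\<And>x y. x \<in> carrier_vec n \<Longrightarrow> y \<in> carrier_vec n \<Longrightarrow> f (x + y) = f x + f y"
    and fsm: "\<And>c x. x \<in> carrier_vec n \<Longrightarrow> f (c \<cdot>\<^sub>v x) = c \<cdot>\<^sub>v f x"
    and A: "A \<in> carrier_mat n k" and B: "B \<in> carrier_mat m l"
    and cB: "\<And>y. y \<in> set (cols B) \<Longrightarrow> y = 0\<^sub>v m \<or> (\<exists>x \<in> set (cols A). y = f x)"
  shows "vec_space.rank m B \<le> vec_space.rank n A"
proof -
  interpret N: vec_space "TYPE(real)" n .
  interpret Mm: vec_space "TYPE(real)" m .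
  have XA: "set (cols A) \<subseteq> carrier_vec n" using A cols_dim by blast
  have XB: "set (cols B) \<subseteq> carrier_vec m" using B cols_dim by blast
  obtain T where maxT: "maximal T (\<lambda>T. T \<subseteq> set (cols A) \<and> N.lin_indpt T)"
    using maximal_exists[of "(\<lambda>T. T \<subseteq> set (cols A) \<and> N.lin_indpt T)" "card (set (cols A))" "{}"]
    by (meson List.finite_set card_mono empty_iff empty_subsetI N.finite_lin_indpt2 rev_finite_subset)
  obtain U where maxU: "maximal U (\<lambda>T. T \<subseteq> set (cols B) \<and> Mm.lin_indpt T)"
    using maximal_exists[of "(\<lambda>T. T \<subseteq> set (cols B) \<and> Mm.lin_indpt T)" "card (set (cols B))" "{}"]
    by (meson List.finite_set card_mono empty_iff empty_subsetI Mm.finite_lin_indpt2 rev_finite_subset)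
  have rA: "N.rank A = card T" using N.rank_card_indpt[OF A maxT] .
  have rB: "Mm.rank B = card U" using Mm.rank_card_indpt[OF B maxU] .
  have T: "T \<subseteq> set (cols A)" "N.lin_indpt T" using maxT unfolding maximal_def by auto
  have U: "U \<subseteq> set (cols B)" "Mm.lin_indpt U" using maxU unfolding maximal_def by auto
  have Tc: "T \<subseteq> carrier_vec n" using T XA by auto
  have finT: "finite T" using T(1) finite_subset by blast
  have finU: "finite U" using U(1) finite_subset by blast
  have XT: "x \<in> N.span T" if x: "x \<in> set (cols A)" for x
  proof (cases "x \<in> T")
    case True then show ?thesis using N.span_mem[OF Tc] by auto
  next
    case False
    show ?thesis
    proof (rule ccontr)
      assume "x \<notin> N.span T"
      hence "N.lin_indpt (T \<union> {x})"
        using N.lin_dep_iff_in_span[OF Tc T(2) _ False] x XA by auto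
      moreover have "T \<union> {x} \<subseteq> set (cols A)" using T x by auto
      ultimately have "T = T \<union> {x}" using maxT unfolding maximal_def by blast
      thus False using False by auto
    qed
  qed
  have fT: "f ` T \<subseteq> carrier_vec m" using Tc fc by auto
  have US: "U \<subseteq> Mm.span (f ` T)"
  proof
    fix y assume "y \<in> U"
    hence "y = 0\<^sub>v m \<or> (\<exists>x \<in> set (cols A). y = f x)" using cB U by auto
    thus "y \<in> Mm.span (f ` T)"
    proof
      assume "y = 0\<^sub>v m" thus ?thesis
        using submodule.zero_closed[OF Mm.span_is_submodule[OF fT]] by simp
    next
      assume "\<exists>x \<in> set (cols A). y = f x"
      then obtain x where "x \<in> set (cols A)" "y = f x" by blast
      thus ?thesis using span_image[OF fc fadd fsm Tc XT] by auto
    qed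
  qed
  note R = Mm.replacement[OF finU finite_imageI[OF finT] fT U(2) US]
  then obtain C :: "real vec set" where "int (card C) \<le> int (card (f ` T)) - int (card U)"
    by blast
  hence "card U \<le> card (f ` T)" by linarith
  also have "\<dots> \<le> card T" using card_image_le[OF finT] .
  finally show ?thesis using rA rB by simp
qed

lemma in_set_colsE:
  assumes "y \<in> set (cols A)" obtains j where "j < dim_col A" "y = col A j"
  using assms by (metis cols_length cols_nth in_set_conv_nth)

lemma col_in_set_cols: "j < dim_col A \<Longrightarrow> col A j \<in> set (cols A)"
  by (metis cols_length cols_nth nth_mem)

definition delm :: "nat \<Rightarrow> real mat \<Rightarrow> real mat" where
  "delm v U = mat (dim_row U - 1) (dim_col U - 1) (\<lambda>(i,j). U $$ (skip v i, skip v j))"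

definition unsk :: "nat \<Rightarrow> nat \<Rightarrow> nat" where
  "unsk v i = (if i < v then i else i - 1)"

lemma skip_lt: "v < n \<Longrightarrow> i < n - 1 \<Longrightarrow> skip v i < n"
  by (auto simp: skip_def)
lemma skip_neq: "skip v i \<noteq> v" by (auto simp: skip_def)
lemma skip_unsk: "i \<noteq> v \<Longrightarrow> skip v (unsk v i) = i"
  by (auto simp: skip_def unsk_def)
lemma unsk_lt: "v < n \<Longrightarrow> i < n \<Longrightarrow> i \<noteq> v \<Longrightarrow> unsk v i < n - 1"
  by (auto simp: unsk_def)
lemma unsk_lt': "v < n \<Longrightarrow> i < n \<Longrightarrow> i \<noteq> v \<Longrightarrow> unsk v i < n - Suc 0"
  by (auto simp: unsk_def)
lemma skip_inj: "skip v i = skip v j \<longleftrightarrow> i = j"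
  by (auto simp: skip_def)

lemma rank_delm_le:
  assumes U: "U \<in> carrier_mat n n" and v: "v < n"
  shows "vec_space.rank (n - 1) (delm v U) \<le> vec_space.rank n U"
proof (rule rank_image[where f = "\<lambda>w. vec (n - 1) (\<lambda>i. w $ skip v i)" and k = n and l = "n - 1"])
  show "delm v U \<in> carrier_mat (n - 1) (n - 1)" using U by (simp add: delm_def)
  fix y assume "y \<in> set (cols (delm v U))"
  then obtain j where j: "j < n - 1" "y = col (delm v U) j"
    using U by (auto simp: delm_def elim: in_set_colsE)
  have "y = vec (n - 1) (\<lambda>i. col U (skip v j) $ skip v i)"
    using j U skip_lt[OF v] by (auto simp: delm_def)
  moreover have "col U (skip v j) \<in> set (cols U)" using U skip_lt[OF v j(1)] col_in_set_cols by auto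
  ultimately show "y = 0\<^sub>v (n - 1) \<or> (\<exists>x\<in>set (cols U). y = vec (n - 1) (\<lambda>i. x $ skip v i))" by blast
qed (use U v skip_lt in auto)

lemma rank_le_delm:
  assumes U: "U \<in> carrier_mat n n" and v: "v < n"
  shows "vec_space.rank n U \<le> vec_space.rank (n - 1) (delm v U) + 2"
proof -
  define S where "S = delm v U"
  define P where "P = mat n n (\<lambda>(i,j). if i = v \<or> j = v then 0 else S $$ (unsk v i, unsk v j))"
  define R1 where "R1 = mat n n (\<lambda>(i,j). (if i = v then 1 else 0) * U $$ (v, j))"
  define R2 where "R2 = mat n n (\<lambda>(i,j). (if i = v then 0 else U $$ (i, v)) * (if j = v then 1 else 0))"
  have S: "S \<in> carrier_mat (n - 1) (n - 1)" using U by (simp add: S_def delm_def)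
  have UP: "U = P + (R1 + R2)"
  proof (rule eq_matI)
    fix i j assume ij: "i < dim_row (P + (R1 + R2))" "j < dim_col (P + (R1 + R2))"
    hence ij': "i < n" "j < n" by (auto simp: P_def R1_def R2_def)
    show "U $$ (i, j) = (P + (R1 + R2)) $$ (i, j)"
    proof (cases "i = v \<or> j = v")
      case True thus ?thesis using ij' by (auto simp: P_def R1_def R2_def)
    next
      case False
      hence "unsk v i < n - 1" "unsk v j < n - 1" using unsk_lt[OF v] ij' by auto
      thus ?thesis using False ij' U by (auto simp: P_def R1_def R2_def S_def delm_def skip_unsk)
    qed
  qed (use U in \<open>auto simp: P_def R1_def R2_def\<close>)
  have "vec_space.rank n U \<le> vec_space.rank n P + vec_space.rank n (R1 + R2)"
    unfolding UP by (rule vec_space.rank_subadditive[where nc = n]) (auto simp: P_def R1_def R2_def)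
  also have "vec_space.rank n (R1 + R2) \<le> vec_space.rank n R1 + vec_space.rank n R2"
    by (rule vec_space.rank_subadditive[where nc = n]) (auto simp: R1_def R2_def)
  also have "vec_space.rank n R1 \<le> 1"
    by (rule vec_space.rank_le_1_product_entries[where nc = n and f = "\<lambda>i. if i = v then 1 else 0" and g = "\<lambda>j. U $$ (v, j)"])
      (auto simp: R1_def)
  also have "vec_space.rank n R2 \<le> 1"
    by (rule vec_space.rank_le_1_product_entries[where nc = n and f = "\<lambda>i. if i = v then 0 else U $$ (i, v)" and g = "\<lambda>j. if j = v then 1 else 0"])
      (unfold R2_def, auto)
  also have "vec_space.rank n P \<le> vec_space.rank (n - 1) S"
  proof (rule rank_image[where f = "\<lambda>w. vec n (\<lambda>i. if i = v then 0 else w $ unsk v i)" and k = "n - 1" and l = n, OF _ _ _ S])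
    show "P \<in> carrier_mat n n" by (simp add: P_def)
    fix y assume "y \<in> set (cols P)"
    then obtain j where j: "j < n" "y = col P j"
      by (auto simp: P_def elim: in_set_colsE)
    show "y = 0\<^sub>v n \<or> (\<exists>x\<in>set (cols S). y = vec n (\<lambda>i. if i = v then 0 else x $ unsk v i))"
    proof (cases "j = v")
      case True thus ?thesis using j by (auto simp: P_def)
    next
      case False
      hence uj: "unsk v j < n - 1" using unsk_lt[OF v] j by auto
      have "y = vec n (\<lambda>i. if i = v then 0 else col S (unsk v j) $ unsk v i)"
        using j False uj S unsk_lt[OF v] by (auto simp: P_def)
      moreover have "col S (unsk v j) \<in> set (cols S)" using S uj by (intro col_in_set_cols) auto
      ultimately show ?thesis by blast
    qed
  qed (auto intro!: eq_vecI simp: unsk_lt'[OF v])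
  finally show ?thesis by (simp add: S_def)
qed

lemma rank_diag:
  fixes g :: "nat \<Rightarrow> real"
  shows "vec_space.rank k (mat k k (\<lambda>(i,j). if i = j then g i else 0)) \<le> card {i. i < k \<and> g i \<noteq> 0}"
proof -
  have gen: "vec_space.rank k (mat k k (\<lambda>(i,j). if i = j \<and> i \<in> K then g i else 0)) \<le> card K"
    if "finite K" for K
    using that
  proof (induction K rule: finite_induct)
    case empty
    have z: "mat k k (\<lambda>(i,j). if i = j \<and> i \<in> {} then g i else 0) = 0\<^sub>m k k"
      by (rule eq_matI) auto
    show ?case by (subst z) (simp add: vec_space.rank_0I)
  next
    case (insert x F)
    define A where "A = mat k k (\<lambda>(i,j). if i = j \<and> i \<in> F then g i else 0)"
    define B where "B = mat k k (\<lambda>(i,j). (if i = x then g x else 0) * (if j = x then 1 else 0))"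
    have eq: "mat k k (\<lambda>(i,j). if i = j \<and> i \<in> insert x F then g i else 0) = A + B"
      by (rule eq_matI) (use insert in \<open>auto simp: A_def B_def\<close>)
    have "vec_space.rank k (A + B) \<le> vec_space.rank k A + vec_space.rank k B"
      by (rule vec_space.rank_subadditive[where nc = k]) (auto simp: A_def B_def)
    also have "vec_space.rank k B \<le> 1"
      by (rule vec_space.rank_le_1_product_entries[where nc = k and f = "\<lambda>i. if i = x then g x else 0" and g = "\<lambda>j. if j = x then 1 else 0"])
        (unfold B_def, auto)
    finally show ?case using insert eq A_def by simp
  qed
  have "mat k k (\<lambda>(i,j). if i = j then g i else 0) = mat k k (\<lambda>(i,j). if i = j \<and> i \<in> {i. i < k \<and> g i \<noteq> 0} then g i else 0)"
    by (rule eq_matI) auto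
  thus ?thesis using gen[of "{i. i < k \<and> g i \<noteq> 0}"] by simp
qed

lemma rank_add_diag:
  fixes g :: "nat \<Rightarrow> real"
  assumes A: "A \<in> carrier_mat k k"
  shows "vec_space.rank k (A + mat k k (\<lambda>(i,j). if i = j then g i else 0)) \<le> vec_space.rank k A + card {i. i < k \<and> g i \<noteq> 0}"
proof -
  have "vec_space.rank k (A + mat k k (\<lambda>(i,j). if i = j then g i else 0)) \<le> vec_space.rank k A + vec_space.rank k (mat k k (\<lambda>(i,j). if i = j then g i else 0))"
    by (rule vec_space.rank_subadditive[where nc = k]) (use A in auto)
  thus ?thesis using rank_diag[of k g] by linarith
qed

lemma card_skip:
  assumes v: "v < n"
  shows "card {i. i < n - 1 \<and> P (skip v i)} = card {k. k < n \<and> k \<noteq> v \<and> P k}"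
proof (rule bij_betw_same_card[where f = "skip v"])
  show "bij_betw (skip v) {i. i < n - 1 \<and> P (skip v i)} {k. k < n \<and> k \<noteq> v \<and> P k}"
  proof (rule bij_betw_imageI)
    show "inj_on (skip v) {i. i < n - 1 \<and> P (skip v i)}" by (auto simp: inj_on_def skip_inj)
    show "skip v ` {i. i < n - 1 \<and> P (skip v i)} = {k. k < n \<and> k \<noteq> v \<and> P k}"
    proof
      show "skip v ` {i. i < n - 1 \<and> P (skip v i)} \<subseteq> {k. k < n \<and> k \<noteq> v \<and> P k}"
        using skip_lt[OF v] skip_neq by auto
      show "{k. k < n \<and> k \<noteq> v \<and> P k} \<subseteq> skip v ` {i. i < n - 1 \<and> P (skip v i)}"
      proof
        fix k assume k: "k \<in> {k. k < n \<and> k \<noteq> v \<and> P k}"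
        hence "unsk v k < n - 1" "skip v (unsk v k) = k" using unsk_lt[OF v] skip_unsk by auto
        thus "k \<in> skip v ` {i. i < n - 1 \<and> P (skip v i)}" using k by (metis (mono_tags, lifting) image_eqI mem_Collect_eq)
      qed
    qed
  qed
qed

lemma degree_delete:
  assumes v: "v < n" and i: "i < n - 1"
  shows "real (degree n E (skip v i)) = real (degree (n - 1) (delete_vertex v E) i) + (if E (skip v i) v then 1 else 0)"
proof -
  let ?u = "skip v i"
  have "degree (n - 1) (delete_vertex v E) i = card {k. k < n \<and> k \<noteq> v \<and> E ?u k}"
    unfolding degree_def delete_vertex_def using card_skip[OF v, of "E ?u"] by simp
  moreover have "{k. k < n \<and> E ?u k} = {k. k < n \<and> k \<noteq> v \<and> E ?u k} \<union> (if E ?u v then {v} else {})"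
    using v by auto
  moreover have "finite {k. k < n \<and> k \<noteq> v \<and> E ?u k}" by simp
  ultimately show ?thesis unfolding degree_def by (auto simp: card_insert_if)
qed

lemma universal_entry:
  assumes v: "v < n" and i: "i < n - 1" and j: "j < n - 1"
  shows "universal_adj (n - 1) (delete_vertex v E) \<alpha> (\<beta> + c * \<delta>) \<gamma> \<delta> $$ (i, j)
     = delm v (universal_adj n E \<alpha> \<beta> \<gamma> \<delta>) $$ (i, j) + (if i = j then \<delta> * (c - (if E (skip v i) v then 1 else 0)) else 0)"
proof -
  have si: "skip v i < n" "skip v j < n" using skip_lt[OF v] i j by auto
  show ?thesis
    using i j si degree_delete[OF v i, of E]
    by (auto simp: universal_adj_def delm_def adj_mat_def deg_mat_def ones_mat_def delete_vertex_def skip_inj algebra_simps)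
qed

lemma universal_carrier: "universal_adj k E \<alpha> \<beta> \<gamma> \<delta> \<in> carrier_mat k k"
  by (simp add: universal_adj_def adj_mat_def deg_mat_def ones_mat_def)

definition Kc :: "nat \<Rightarrow> nat \<Rightarrow> (nat \<Rightarrow> nat \<Rightarrow> bool) \<Rightarrow> real \<Rightarrow> nat" where
  "Kc n v E c = card {i. i < n - 1 \<and> c - (if E (skip v i) v then 1 else 0) \<noteq> 0}"

lemma Kc_mono: "card {i. i < (k::nat) \<and> \<delta> * h i \<noteq> (0::real)} \<le> card {i. i < k \<and> h i \<noteq> 0}"
  by (rule card_mono) (rule finite_subset[of _ "{..<k}"], auto)

lemma rank_lower:
  assumes v: "v < n"
  shows "vec_space.rank (n - 1) (universal_adj (n - 1) (delete_vertex v E) \<alpha> (\<beta> + c * \<delta>) \<gamma> \<delta>)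
     \<le> vec_space.rank n (universal_adj n E \<alpha> \<beta> \<gamma> \<delta>) + Kc n v E c"
proof -
  let ?U = "universal_adj n E \<alpha> \<beta> \<gamma> \<delta>"
  let ?h = "\<lambda>i. c - (if E (skip v i) v then 1 else 0)"
  have eq: "universal_adj (n - 1) (delete_vertex v E) \<alpha> (\<beta> + c * \<delta>) \<gamma> \<delta>
      = delm v ?U + mat (n - 1) (n - 1) (\<lambda>(i,j). if i = j then \<delta> * ?h i else 0)"
    by (rule eq_matI) (auto simp: universal_entry[OF v] universal_carrier delm_def
        simp del: One_nat_def, simp_all add: universal_adj_def adj_mat_def deg_mat_def ones_mat_def delm_def)
  have D: "delm v ?U \<in> carrier_mat (n - 1) (n - 1)"
    using carrier_matD[OF universal_carrier[of n E \<alpha> \<beta> \<gamma> \<delta>]] by (simp add: delm_def)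
  have "vec_space.rank (n - 1) (delm v ?U + mat (n - 1) (n - 1) (\<lambda>(i,j). if i = j then \<delta> * ?h i else 0))
     \<le> vec_space.rank (n - 1) (delm v ?U) + card {i. i < n - 1 \<and> \<delta> * ?h i \<noteq> 0}"
    by (rule rank_add_diag[OF D])
  also have "\<dots> \<le> vec_space.rank n ?U + Kc n v E c"
    using rank_delm_le[OF universal_carrier[of n E \<alpha> \<beta> \<gamma> \<delta>] v] Kc_mono[of "n - 1" \<delta> ?h] unfolding Kc_def by linarith
  finally show ?thesis using eq by simp
qed

lemma rank_upper:
  assumes v: "v < n"
  shows "vec_space.rank n (universal_adj n E \<alpha> \<beta> \<gamma> \<delta>)
     \<le> vec_space.rank (n - 1) (universal_adj (n - 1) (delete_vertex v E) \<alpha> (\<beta> + c * \<delta>) \<gamma> \<delta>) + Kc n v E c + 2"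
proof -
  let ?U = "universal_adj n E \<alpha> \<beta> \<gamma> \<delta>"
  let ?U' = "universal_adj (n - 1) (delete_vertex v E) \<alpha> (\<beta> + c * \<delta>) \<gamma> \<delta>"
  let ?h = "\<lambda>i. c - (if E (skip v i) v then 1 else 0)"
  have eq: "delm v ?U = ?U' + mat (n - 1) (n - 1) (\<lambda>(i,j). if i = j then (- \<delta>) * ?h i else 0)"
    by (rule eq_matI) (auto simp: universal_entry[OF v] universal_carrier delm_def
        simp del: One_nat_def, simp_all add: universal_adj_def adj_mat_def deg_mat_def ones_mat_def delm_def)
  have "vec_space.rank (n - 1) (?U' + mat (n - 1) (n - 1) (\<lambda>(i,j). if i = j then (- \<delta>) * ?h i else 0))
     \<le> vec_space.rank (n - 1) ?U' + card {i. i < n - 1 \<and> (- \<delta>) * ?h i \<noteq> 0}"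
    by (rule rank_add_diag[OF universal_carrier])
  also have "\<dots> \<le> vec_space.rank (n - 1) ?U' + Kc n v E c"
    using Kc_mono[of "n - 1" "- \<delta>" ?h] unfolding Kc_def by linarith
  finally have "vec_space.rank (n - 1) (delm v ?U) \<le> vec_space.rank (n - 1) ?U' + Kc n v E c"
    using eq by simp
  thus ?thesis using rank_le_delm[OF universal_carrier[of n E \<alpha> \<beta> \<gamma> \<delta>] v] by linarith
qed

lemma Kc_eq0: "Kc n v E 0 = card {i. i < n - 1 \<and> E (skip v i) v}"
  unfolding Kc_def by (rule arg_cong[where f = card]) auto

lemma Kc0:
  assumes G: "simple_graph n E" and v: "v < n"
  shows "Kc n v E 0 = degree n E v"
proof -
  have "Kc n v E 0 = card {i. i < n - 1 \<and> E (skip v i) v}" by (rule Kc_eq0)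
  also have "\<dots> = card {k. k < n \<and> k \<noteq> v \<and> E k v}" by (rule card_skip[OF v])
  also have "{k. k < n \<and> k \<noteq> v \<and> E k v} = {k. k < n \<and> E v k}"
    using G v unfolding simple_graph_def by auto
  finally show ?thesis unfolding degree_def .
qed

lemma Kc1:
  assumes v: "v < n"
  shows "Kc n v E 1 = (n - 1) - Kc n v E 0"
proof -
  have "Kc n v E 1 = card ({..<n - 1} - {i. i < n - 1 \<and> E (skip v i) v})"
    unfolding Kc_def by (rule arg_cong[where f = card]) auto
  also have "\<dots> = (n - 1) - card {i. i < n - 1 \<and> E (skip v i) v}"
    by (subst card_Diff_subset) auto
  finally show ?thesis using Kc_eq0[of n v E] by simp
qed

lemma Kc0_le: "Kc n v E 0 \<le> n - 1"
  unfolding Kc_def by (rule order_trans[OF card_mono[of "{..<n - 1}"]]) auto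

lemma mur_set_finite:
  "finite {vec_space.rank k (universal_adj k E \<alpha> \<beta> \<gamma> \<delta>) | \<alpha> \<beta> \<gamma> \<delta>. \<alpha> \<noteq> 0}"
proof (rule finite_subset[of _ "{..k}"])
  show "{vec_space.rank k (universal_adj k E \<alpha> \<beta> \<gamma> \<delta>) | \<alpha> \<beta> \<gamma> \<delta>. \<alpha> \<noteq> 0} \<subseteq> {..k}"
    using vec_space.rank_le_nc[OF universal_carrier] by auto
qed simp

lemma mur_le:
  assumes "\<alpha> \<noteq> 0"
  shows "mur k E \<le> vec_space.rank k (universal_adj k E \<alpha> \<beta> \<gamma> \<delta>)"
  unfolding mur_def by (rule Min_le[OF mur_set_finite]) (use assms in blast)

lemma mur_ex:
  "\<exists>\<alpha> \<beta> \<gamma> \<delta>. \<alpha> \<noteq> 0 \<and> mur k E = vec_space.rank k (universal_adj k E \<alpha> \<beta> \<gamma> \<delta>)"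
proof -
  have ne: "{vec_space.rank k (universal_adj k E \<alpha> \<beta> \<gamma> \<delta>) | \<alpha> \<beta> \<gamma> \<delta>. \<alpha> \<noteq> (0::real)} \<noteq> {}"
    by (rule ccontr) (use zero_neq_one in \<open>metis (mono_tags, lifting) empty_iff mem_Collect_eq\<close>)
  have "mur k E \<in> {vec_space.rank k (universal_adj k E \<alpha> \<beta> \<gamma> \<delta>) | \<alpha> \<beta> \<gamma> \<delta>. \<alpha> \<noteq> 0}"
    unfolding mur_def by (rule Min_in[OF mur_set_finite ne])
  thus ?thesis by blast
qed

theorem corollary18:
  fixes n v :: nat and E :: "nat \<Rightarrow> nat \<Rightarrow> bool"
  assumes "simple_graph n E" and "v < n"
  defines "d \<equiv> int (degree n E v)"
  shows "max (- d) (- (int n - d - 1)) \<le> int (mur n E) - int (mur (n - 1) (delete_vertex v E))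
       \<and> int (mur n E) - int (mur (n - 1) (delete_vertex v E)) \<le> min (d + 2) ((int n - d - 1) + 2)"
proof -
  note G = assms(1) and v = assms(2)
  let ?E' = "delete_vertex v E"
  have K0: "Kc n v E 0 = degree n E v" using Kc0[OF G v] .
  have K1: "Kc n v E 1 = (n - 1) - degree n E v" using Kc1[OF v] K0 by simp
  have dle: "degree n E v \<le> n - 1" using Kc0_le[of n v E] K0 by simp
  obtain \<alpha> \<beta> \<gamma> \<delta> where a: "\<alpha> \<noteq> 0" and M: "mur n E = vec_space.rank n (universal_adj n E \<alpha> \<beta> \<gamma> \<delta>)"
    using mur_ex by blast
  obtain \<alpha>' \<beta>' \<gamma>' \<delta>' where a': "\<alpha>' \<noteq> 0" and M': "mur (n - 1) ?E' = vec_space.rank (n - 1) (universal_adj (n - 1) ?E' \<alpha>' \<beta>' \<gamma>' \<delta>')"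
    using mur_ex by blast
  have low: "mur (n - 1) ?E' \<le> mur n E + Kc n v E c" for c
    using mur_le[OF a, of "n - 1" ?E' "\<beta> + c * \<delta>" \<gamma> \<delta>] rank_lower[OF v, of E \<alpha> \<beta> c \<delta> \<gamma>] M by linarith
  have up: "mur n E \<le> mur (n - 1) ?E' + Kc n v E c + 2" for c
  proof -
    have "mur n E \<le> vec_space.rank n (universal_adj n E \<alpha>' (\<beta>' - c * \<delta>') \<gamma>' \<delta>')"
      using mur_le[OF a'] .
    also have "\<dots> \<le> vec_space.rank (n - 1) (universal_adj (n - 1) ?E' \<alpha>' ((\<beta>' - c * \<delta>') + c * \<delta>') \<gamma>' \<delta>') + Kc n v E c + 2"
      by (rule rank_upper[OF v])
    finally show ?thesis using M' by simp
  qed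
  have l0: "mur (n - 1) ?E' \<le> mur n E + degree n E v" using low[of 0] K0 by simp
  have l1: "mur (n - 1) ?E' \<le> mur n E + ((n - 1) - degree n E v)" using low[of 1] K1 by simp
  have u0: "mur n E \<le> mur (n - 1) ?E' + degree n E v + 2" using up[of 0] K0 by simp
  have u1: "mur n E \<le> mur (n - 1) ?E' + ((n - 1) - degree n E v) + 2" using up[of 1] K1 by simp
  have n1: "int (n - 1) = int n - 1" using v by simp
  have dd: "int ((n - 1) - degree n E v) = int n - d - 1" using dle v unfolding d_def by simp
  show ?thesis using l0 l1 u0 u1 dd unfolding d_def by simp linarith?
qed
end
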